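(* Let $\delta_B,\delta_R\ge 1$ be integers, and for $\lambda\in\mathbb C$ let $\mu^\pm(\lambda)$ be the eigenvalues of the matrix $T_0(\lambda)$ defined in the context, i.e. \[\mu^\pm(\lambda)=\tfrac12\operatorname{tr}T_0(\lambda)\pm\sqrt{\tfrac14(\operatorname{tr}T_0(\lambda))^2-\tfrac{1}{\delta_B\delta_R}}.\] Then, as $\lambda\to-\infty$ along the real axis, \[\lim_{\lambda\to-\infty}e^{-2|\operatorname{Im}\sqrt\lambda|}\mu^+(\lambda)=\frac{\delta_R+1}{2\delta_R}\cdot\frac{\delta_B+1}{2\delta_B},\qquad \lim_{\lambda\to-\infty}e^{2|\operatorname{Im}\sqrt\lambda|}\mu^-(\lambda)=\frac{2}{\delta_R+1}\cdot\frac{2}{\delta_B+1}.\]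
   Context: Write $\omega=\sqrt\lambda$ and define the entire functions of $\lambda$: $c(\lambda)=\cos\omega$, $c'(\lambda)=-\omega\sin\omega$, $s(\lambda)=\sin\omega/\omega$, $s'(\lambda)=\cos\omega$. Let $M_0(\lambda)=\begin{pmatrix}c&s\\ c'&s'\end{pmatrix}$, $J_B=\begin{pmatrix}1&0\\0&1/\delta_B\end{pmatrix}$, $J_R=\begin{pmatrix}1&0\\0&1/\delta_R\end{pmatrix}$, and $T_0(\lambda)=J_RM_0(\lambda)J_BM_0(\lambda)$ (the transition matrix propagating initial data $(y,y')$ over two consecutive edges of the biregular tree with degrees $\delta_B+1$, $\delta_R+1$). Then $\det T_0(\lambda)=1/(\delta_B\delta_R)$ and $\operatorname{tr}T_0(\lambda)=\cos^2\omega\,(1+\frac{1}{\delta_B\delta_R})-\sin^2\omega\,(\frac1{\delta_R}+\frac1{\delta_B})$. For real $\lambda<0$ this trace is real and, for $|\lambda|$ large, larger than $2/\sqrt{\delta_B\delta_R}$, so $\mu^\pm(\lambda)$ are real with the nonnegative square root taken. *)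

theory Defs
  imports "HOL-Analysis.Analysis"
begin

text \<open>omega = sqrt lambda (principal branch); the functions below are even in omega,
  so they are the entire functions of lambda from the paper.\<close>
definition omg :: "complex \<Rightarrow> complex" where "omg l = csqrt l"

definition cfun :: "complex \<Rightarrow> complex" where "cfun l = cos (omg l)"
definition cfun' :: "complex \<Rightarrow> complex" where "cfun' l = - omg l * sin (omg l)"
definition sfun :: "complex \<Rightarrow> complex" where
  "sfun l = (if omg l = 0 then 1 else sin (omg l) / omg l)"
definition sfun' :: "complex \<Rightarrow> complex" where "sfun' l = cos (omg l)"

definition M0 :: "complex \<Rightarrow> complex^2^2" where
  "M0 l = vector [vector [cfun l, sfun l], vector [cfun' l, sfun' l]]"

definition Jmat :: "nat \<Rightarrow> complex^2^2" where
  "Jmat d = vector [vector [1, 0], vector [0, 1 / of_nat d]]"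

definition T0 :: "nat \<Rightarrow> nat \<Rightarrow> complex \<Rightarrow> complex^2^2" where
  "T0 dB dR l = Jmat dR ** M0 l ** Jmat dB ** M0 l"

definition mu_plus :: "nat \<Rightarrow> nat \<Rightarrow> complex \<Rightarrow> complex" where
  "mu_plus dB dR l = trace (T0 dB dR l) / 2
     + csqrt ((trace (T0 dB dR l))\<^sup>2 / 4 - 1 / (of_nat dB * of_nat dR))"

definition mu_minus :: "nat \<Rightarrow> nat \<Rightarrow> complex \<Rightarrow> complex" where
  "mu_minus dB dR l = trace (T0 dB dR l) / 2
     - csqrt ((trace (T0 dB dR l))\<^sup>2 / 4 - 1 / (of_nat dB * of_nat dR))"

end

theory Submission imports Defs "HOL-Real_Asymp.Real_Asymp" begin
lemma trace_T0: "trace (T0 dB dR l) = cfun l ^ 2 + sfun l * cfun' l / of_nat dB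
   + (cfun' l * sfun l + sfun' l ^ 2 / of_nat dB) / of_nat dR"
  unfolding T0_def trace_def M0_def Jmat_def
  by (simp add: sum_2 matrix_matrix_mult_def power2_eq_square add_divide_distrib mult.commute)

lemma vals:
  fixes x :: real assumes "x < 0"
  defines "t \<equiv> sqrt (-x)"
  shows "cfun (of_real x) = of_real ((exp t + inverse (exp t))/2)"
    "sfun' (of_real x) = of_real ((exp t + inverse (exp t))/2)"
    "sfun (of_real x) = of_real ((exp t - inverse (exp t))/(2*t))"
    "cfun' (of_real x) = of_real (t*(exp t - inverse (exp t))/2)"
proof -
  have t: "t > 0" using assms by (simp add: t_def)
  have o: "omg (of_real x) = \<i> * of_real t" using assms by (simp add: omg_def t_def)
  show "cfun (of_real x) = of_real ((exp t + inverse (exp t))/2)"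
    unfolding cfun_def o by (simp add: cos_i_times exp_of_real)
  show "sfun' (of_real x) = of_real ((exp t + inverse (exp t))/2)"
    unfolding sfun'_def o by (simp add: cos_i_times exp_of_real)
  show "sfun (of_real x) = of_real ((exp t - inverse (exp t))/(2*t))"
    unfolding sfun_def o using t by (simp add: sin_i_times exp_of_real field_simps)
  show "cfun' (of_real x) = of_real (t*(exp t - inverse (exp t))/2)"
    unfolding cfun'_def o using t by (simp add: sin_i_times exp_of_real field_simps)
qed
lemma u_lim: "((\<lambda>x::real. exp (- 2 * sqrt (- x))) \<longlongrightarrow> 0) at_bot"
  by real_asymp

lemma key:
  fixes x :: real and dB dR :: nat
  assumes x: "x < 0" and dB: "dB \<ge> 1" and dR: "dR \<ge> 1"
  defines "p \<equiv> 1 / (real dB * real dR)"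
  defines "A \<equiv> 1 + p" and "B \<equiv> 1 / real dB + 1 / real dR"
  defines "u \<equiv> exp (- 2 * sqrt (- x))"
  defines "G \<equiv> ((1+u)^2 * A + (1-u)^2 * B) / 4"
  defines "H \<equiv> G / 2 + sqrt (G^2/4 - p * u^2)"
  shows "complex_of_real (exp (- 2 * \<bar>Im (csqrt (complex_of_real x))\<bar>)) * mu_plus dB dR (of_real x)
           = of_real H"
    "complex_of_real (exp (2 * \<bar>Im (csqrt (complex_of_real x))\<bar>)) * mu_minus dB dR (of_real x)
           = of_real (p / H)"
proof -
  define t where "t = sqrt (-x)"
  have t: "t > 0" using x by (simp add: t_def)
  have im: "\<bar>Im (csqrt (complex_of_real x))\<bar> = t" using x by (simp add: t_def)
  define E where "E = exp t"
  have E: "E > 0" by (simp add: E_def)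
  define ch where "ch = (E + inverse E)/2"
  define sh where "sh = (E - inverse E)/2"
  have chsh: "ch^2 = 1 + sh^2" using E unfolding ch_def sh_def by (simp add: field_simps power2_eq_square)
  define T where "T = ch^2 + sh^2 / real dB + (sh^2 + ch^2 / real dB) / real dR"
  have tr: "trace (T0 dB dR (of_real x)) = of_real T"
  proof -
    have c1: "cfun (of_real x) = of_real ch" "sfun' (of_real x) = of_real ch"
      "sfun (of_real x) = of_real (sh / t)" "cfun' (of_real x) = of_real (t * sh)"
      using vals[OF x] unfolding t_def[symmetric] E_def[symmetric] ch_def sh_def
      by (simp_all add: field_simps)
    have R: "ch^2 + (sh/t)*(t * sh)/real dB + ((t * sh) * (sh/t) + ch^2/real dB)/real dR = T"
      using t by (simp add: T_def power2_eq_square)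
    have "complex_of_real T = of_real (ch^2 + (sh/t)*(t * sh)/real dB + ((t * sh) * (sh/t) + ch^2/real dB)/real dR)"
      using R by simp
    then show ?thesis unfolding trace_T0 c1 by simp
  qed
  have dd: "1 \<le> real dB * real dR" using dB dR
    by (metis mult_le_mono of_nat_1 of_nat_le_iff of_nat_mult mult_1)
  have p0: "p > 0" "p \<le> 1" using dB dR dd by (auto simp: p_def field_simps)
  have B0: "B \<ge> 0" by (simp add: B_def)
  have TA: "T = (1 + sh^2) * A + sh^2 * B" unfolding T_def chsh A_def B_def p_def
    using dB dR by (simp add: field_simps)
  have TG: "T \<ge> 1 + p" unfolding TA A_def using B0 p0 by (simp add: algebra_simps)
  have disc: "T^2/4 - p \<ge> 0"
  proof -
    have "(1+p)^2 \<le> T^2" using TG p0 by (intro power_mono) auto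
    moreover have "(1+p)^2 - 4*p \<ge> 0" proof - have "(1+p)^2 - 4*p = (1-p)^2" by (simp add: power2_eq_square algebra_simps)
      then show ?thesis by simp qed
    ultimately show ?thesis by linarith
  qed
  define S where "S = sqrt (T^2/4 - p)"
  have S0: "S \<ge> 0" using disc by (simp add: S_def)
  have SS: "S^2 = T^2/4 - p" using disc by (simp add: S_def)
  have csq: "csqrt ((of_real T)\<^sup>2 / 4 - 1 / (of_nat dB * of_nat dR)) = of_real S"
  proof -
    have "(of_real T)\<^sup>2 / 4 - 1 / (of_nat dB * of_nat dR) = complex_of_real (T^2/4 - p)"
      by (simp add: p_def)
    then show ?thesis using disc by (simp add: S_def)
  qed
  have mp: "mu_plus dB dR (of_real x) = of_real (T/2 + S)"
    unfolding mu_plus_def tr csq by simp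
  have mm: "mu_minus dB dR (of_real x) = of_real (T/2 - S)"
    unfolding mu_minus_def tr csq by simp
  have uE: "u = inverse E ^ 2" unfolding u_def E_def t_def
    by (simp add: exp_minus[symmetric] power2_eq_square exp_add[symmetric])
  have u0: "u > 0" by (simp add: u_def)
  have uT: "u * T = G" unfolding TA G_def uE sh_def using E
    by (simp add: field_simps power2_eq_square)
  have uS: "u * S = sqrt (G^2/4 - p * u^2)"
  proof -
    have "u * S = sqrt (u^2) * S" using u0 by simp
    also have "\<dots> = sqrt (u^2 * (T^2/4 - p))" by (simp add: S_def real_sqrt_mult)
    also have "u^2 * (T^2/4 - p) = G^2/4 - p * u^2" unfolding uT[symmetric]
      by (simp add: power2_eq_square algebra_simps)
    finally show ?thesis .
  qed
  have HuT: "H = u * (T/2 + S)"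
  proof -
    have "H = G/2 + u * S" unfolding H_def uS by simp
    then show ?thesis unfolding uT[symmetric] by (simp add: algebra_simps)
  qed
  have pos: "T/2 + S > 0" using TG p0 S0 by simp
  have prod: "(T/2 - S) * (T/2 + S) = p" using SS by (simp add: power2_eq_square algebra_simps)
  show "complex_of_real (exp (- 2 * \<bar>Im (csqrt (complex_of_real x))\<bar>)) * mu_plus dB dR (of_real x)
           = of_real H"
    unfolding im mp HuT u_def t_def by simp
  have e2: "exp (2 * t) = inverse u" unfolding u_def t_def by (simp add: exp_minus)
  have "exp (2 * t) * (T/2 - S) = p / H"
  proof -
    have "p / H = ((T/2 - S) * (T/2 + S)) / (u * (T/2 + S))" unfolding prod HuT ..
    also have "\<dots> = (T/2 - S) / u" using pos by simp
    finally show ?thesis unfolding e2 by (simp add: field_simps)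
  qed
  then show "complex_of_real (exp (2 * \<bar>Im (csqrt (complex_of_real x))\<bar>)) * mu_minus dB dR (of_real x)
           = of_real (p / H)"
    unfolding im mm by (metis of_real_mult)
qed
theorem lemma4p1:
  fixes dB dR :: nat
  assumes "dB \<ge> 1" and "dR \<ge> 1"
  shows "(((\<lambda>x::real. complex_of_real (exp (- 2 * \<bar>Im (csqrt (complex_of_real x))\<bar>))
              * mu_plus dB dR (complex_of_real x))
           \<longlongrightarrow> ((of_nat dR + 1) / (2 * of_nat dR)) * ((of_nat dB + 1) / (2 * of_nat dB))) at_bot)
         \<and> (((\<lambda>x::real. complex_of_real (exp (2 * \<bar>Im (csqrt (complex_of_real x))\<bar>))
              * mu_minus dB dR (complex_of_real x))
           \<longlongrightarrow> (2 / (of_nat dR + 1)) * (2 / (of_nat dB + 1))) at_bot)"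
proof -
  define p where "p = 1 / (real dB * real dR)"
  define A where "A = 1 + p"
  define B where "B = 1 / real dB + 1 / real dR"
  define Gf where "Gf = (\<lambda>u::real. ((1+u)^2 * A + (1-u)^2 * B) / 4)"
  define Hf where "Hf = (\<lambda>u::real. Gf u / 2 + sqrt ((Gf u)^2/4 - p * u^2))"
  define U where "U = (\<lambda>x::real. exp (- 2 * sqrt (- x)))"
  have dB: "real dB > 0" "real dR > 0" using assms by auto
  have G0: "Gf 0 = (A + B) / 4" by (simp add: Gf_def)
  have AB: "A + B > 0" using dB unfolding A_def B_def p_def by (intro add_pos_nonneg add_pos_pos) auto
  have H0: "Hf 0 = (A + B) / 4"
  proof -
    have "sqrt (((A + B) / 4)\<^sup>2 / 4) = sqrt ((((A + B) / 8))\<^sup>2)" by (simp add: power2_eq_square)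
    also have "\<dots> = (A+B)/8" using AB by simp
    finally show ?thesis by (simp add: Hf_def G0 field_simps)
  qed
  have lim: "((\<lambda>x. Hf (U x)) \<longlongrightarrow> Hf 0) at_bot"
    unfolding Hf_def Gf_def U_def by (intro tendsto_intros u_lim) auto
  have lim2: "((\<lambda>x. p / Hf (U x)) \<longlongrightarrow> p / Hf 0) at_bot"
    using AB H0 by (intro tendsto_intros lim) auto
  have ev: "eventually (\<lambda>x::real. x < 0) at_bot" unfolding eventually_at_bot_dense by blast
  have v1: "complex_of_real (Hf 0) = ((of_nat dR + 1) / (2 * of_nat dR)) * ((of_nat dB + 1) / (2 * of_nat dB))"
  proof -
    have "Hf 0 = ((real dR + 1) / (2 * real dR)) * ((real dB + 1) / (2 * real dB))"
      unfolding H0 A_def B_def p_def using dB by (simp add: field_simps)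
    then show ?thesis by simp
  qed
  have v2: "complex_of_real (p / Hf 0) = (2 / (of_nat dR + 1)) * (2 / (of_nat dB + 1))"
  proof -
    have ABe: "A + B = (real dB + 1) * (real dR + 1) / (real dB * real dR)"
      unfolding A_def B_def p_def using dB by (simp add: field_simps)
    have "p / Hf 0 = (2 / (real dR + 1)) * (2 / (real dB + 1))"
      unfolding H0 ABe p_def using dB by (simp add: field_simps add_pos_pos)
    then show ?thesis by simp
  qed
  show ?thesis
  proof
    show "((\<lambda>x::real. complex_of_real (exp (- 2 * \<bar>Im (csqrt (complex_of_real x))\<bar>))
              * mu_plus dB dR (complex_of_real x))
           \<longlongrightarrow> ((of_nat dR + 1) / (2 * of_nat dR)) * ((of_nat dB + 1) / (2 * of_nat dB))) at_bot"
      unfolding v1[symmetric]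
    proof (rule tendsto_cong[THEN iffD1, OF _ tendsto_of_real[OF lim]])
      show "\<forall>\<^sub>F x in at_bot. complex_of_real (Hf (U x)) = complex_of_real (exp (- 2 * \<bar>Im (csqrt (complex_of_real x))\<bar>))
              * mu_plus dB dR (complex_of_real x)"
        using ev proof eventually_elim
        case (elim x)
        show ?case using key(1)[OF elim assms] by (simp add: Hf_def Gf_def U_def A_def B_def p_def)
      qed
    qed
    show "((\<lambda>x::real. complex_of_real (exp (2 * \<bar>Im (csqrt (complex_of_real x))\<bar>))
              * mu_minus dB dR (complex_of_real x))
           \<longlongrightarrow> (2 / (of_nat dR + 1)) * (2 / (of_nat dB + 1))) at_bot"
      unfolding v2[symmetric]
    proof (rule tendsto_cong[THEN iffD1, OF _ tendsto_of_real[OF lim2]])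
      show "\<forall>\<^sub>F x in at_bot. complex_of_real (p / Hf (U x)) = complex_of_real (exp (2 * \<bar>Im (csqrt (complex_of_real x))\<bar>))
              * mu_minus dB dR (complex_of_real x)"
        using ev proof eventually_elim
        case (elim x)
        show ?case using key(2)[OF elim assms] by (simp add: Hf_def Gf_def U_def A_def B_def p_def)
      qed
    qed
  qed
qed

end
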